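(* Let $G=(V,E)$ be a $k$-cozy graph with edge connectivity $\kappa'(G)=2\ell$, and let $D\subset E$ with $|D|=2\ell$ be a set of edges whose removal disconnects $G$ into two components $G_1$ and $G_2$. Let $V_1,V_2$ be multisets of vertices, both taken from the vertex set of the same component (either $G_1$ or $G_2$), with $|V_1|=|V_2|=q\le\ell$. Then there are $q$ edge-disjoint paths in $G$ connecting $V_1$ and $V_2$ with multiplicities preserved, such that every vertex of $V_1$ and of $V_2$ is the endpoint of some such path.
   Context: An undirected graph $G$ is $k$-cozy if it is connected, $k$-regular, and equipped with a $1$-factorization, i.e., an assignment of colors from $\{1,\dots,k\}$ to its edges such that the $k$ edges incident at each vertex receive distinct colors. The edge connectivity $\kappa'(G)$ is the minimum number of edges whose removal disconnects $G$. "Multiplicities preserved" means a vertex appearing $m$ times in $V_1$ (resp. $V_2$) is the endpoint of $m$ of the paths. *)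

theory Defs
  imports Main "HOL-Library.Multiset"
begin

definition simple_graph :: "'a set \<Rightarrow> 'a set set \<Rightarrow> bool" where
  "simple_graph V E \<longleftrightarrow> finite V \<and> (\<forall>e\<in>E. \<exists>u v. u \<noteq> v \<and> u \<in> V \<and> v \<in> V \<and> e = {u, v})"

definition incident_edges :: "'a set set \<Rightarrow> 'a \<Rightarrow> 'a set set" where
  "incident_edges E v = {e \<in> E. v \<in> e}"

definition regular :: "'a set \<Rightarrow> 'a set set \<Rightarrow> nat \<Rightarrow> bool" where
  "regular V E k \<longleftrightarrow> (\<forall>v\<in>V. card (incident_edges E v) = k)"

definition one_factorization :: "'a set \<Rightarrow> 'a set set \<Rightarrow> nat \<Rightarrow> ('a set \<Rightarrow> nat) \<Rightarrow> bool" where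
  "one_factorization V E k col \<longleftrightarrow>
     (\<forall>e\<in>E. col e \<in> {1..k}) \<and> (\<forall>v\<in>V. inj_on col (incident_edges E v))"

definition walk :: "'a set \<Rightarrow> 'a set set \<Rightarrow> 'a list \<Rightarrow> bool" where
  "walk V E xs \<longleftrightarrow> xs \<noteq> [] \<and> set xs \<subseteq> V \<and>
     (\<forall>i. Suc i < length xs \<longrightarrow> {xs ! i, xs ! Suc i} \<in> E)"

definition path :: "'a set \<Rightarrow> 'a set set \<Rightarrow> 'a list \<Rightarrow> bool" where
  "path V E xs \<longleftrightarrow> walk V E xs \<and> distinct xs"

definition path_edges :: "'a list \<Rightarrow> 'a set set" where
  "path_edges xs = {{xs ! i, xs ! Suc i} | i. Suc i < length xs}"

definition reachable :: "'a set \<Rightarrow> 'a set set \<Rightarrow> 'a \<Rightarrow> 'a \<Rightarrow> bool" where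
  "reachable V E u v \<longleftrightarrow> (\<exists>xs. path V E xs \<and> hd xs = u \<and> last xs = v)"

definition connected_graph :: "'a set \<Rightarrow> 'a set set \<Rightarrow> bool" where
  "connected_graph V E \<longleftrightarrow> V \<noteq> {} \<and> (\<forall>u\<in>V. \<forall>v\<in>V. reachable V E u v)"

definition components :: "'a set \<Rightarrow> 'a set set \<Rightarrow> 'a set set" where
  "components V E = {{v \<in> V. reachable V E u v} | u. u \<in> V}"

definition cozy :: "'a set \<Rightarrow> 'a set set \<Rightarrow> nat \<Rightarrow> ('a set \<Rightarrow> nat) \<Rightarrow> bool" where
  "cozy V E k col \<longleftrightarrow> simple_graph V E \<and> connected_graph V E \<and> regular V E k
     \<and> one_factorization V E k col"

definition disconnecting :: "'a set \<Rightarrow> 'a set set \<Rightarrow> 'a set set \<Rightarrow> bool" where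
  "disconnecting V E F \<longleftrightarrow> F \<subseteq> E \<and> \<not> connected_graph V (E - F)"

definition edge_connectivity :: "'a set \<Rightarrow> 'a set set \<Rightarrow> nat" where
  "edge_connectivity V E = (LEAST n. \<exists>F. disconnecting V E F \<and> card F = n)"

end

theory Submission
  imports Defs
begin


fun pe :: "'a list \<Rightarrow> 'a set set" where
  "pe [] = {}" | "pe [x] = {}" | "pe (x#y#xs) = insert {x,y} (pe (y#xs))"

lemma path_edges_pe: "path_edges xs = pe xs"
proof (induction xs rule: pe.induct)
  case (3 x y xs)
  have "path_edges (x#y#xs) = insert {x,y} (path_edges (y#xs))"
    unfolding path_edges_def
  proof (intro set_eqI iffI)
    fix e assume "e \<in> {{(x#y#xs) ! i, (x#y#xs) ! Suc i} |i. Suc i < length (x#y#xs)}"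
    then obtain i where i: "e = {(x#y#xs) ! i, (x#y#xs) ! Suc i}" "Suc i < length (x#y#xs)" by blast
    show "e \<in> insert {x, y} {{(y#xs) ! i, (y#xs) ! Suc i} |i. Suc i < length (y#xs)}"
    proof (cases i)
      case 0 then show ?thesis using i by simp
    next
      case (Suc j) then show ?thesis using i by auto
    qed
  next
    fix e assume "e \<in> insert {x, y} {{(y#xs) ! i, (y#xs) ! Suc i} |i. Suc i < length (y#xs)}"
    then show "e \<in> {{(x#y#xs) ! i, (x#y#xs) ! Suc i} |i. Suc i < length (x#y#xs)}"
    proof
      assume "e = {x,y}" then show ?thesis by (intro CollectI exI[of _ 0]) simp
    next
      assume "e \<in> {{(y#xs) ! i, (y#xs) ! Suc i} |i. Suc i < length (y#xs)}"
      then obtain i where "e = {(y#xs) ! i, (y#xs) ! Suc i}" "Suc i < length (y#xs)" by blast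
      then show ?thesis by (intro CollectI exI[of _ "Suc i"]) simp
    qed
  qed
  then show ?case using 3 by simp
qed (auto simp: path_edges_def)

definition wk :: "'a set \<Rightarrow> 'a set set \<Rightarrow> 'a list \<Rightarrow> bool" where
  "wk V E p \<longleftrightarrow> p \<noteq> [] \<and> set p \<subseteq> V \<and> pe p \<subseteq> E"

lemma walk_wk: "walk V E xs \<longleftrightarrow> wk V E xs"
  unfolding walk_def wk_def path_edges_pe[symmetric] path_edges_def by blast

lemma pe_append: "p \<noteq> [] \<Longrightarrow> q \<noteq> [] \<Longrightarrow> pe (p @ q) = pe p \<union> pe q \<union> {{last p, hd q}}"
proof (induction p rule: pe.induct)
  case (2 x) then show ?case by (cases q) auto
next
  case (3 x y xs) then show ?case by auto
qed simp

lemma pe_suffix: "pe c \<subseteq> pe (a @ c)"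
proof (induction a)
  case (Cons z w) then show ?case by (cases "w @ c") auto
qed simp

lemma pe_set: "e \<in> pe p \<Longrightarrow> e \<subseteq> set p"
  by (induction p rule: pe.induct) auto

lemma walk_to_path: "xs \<noteq> [] \<Longrightarrow> \<exists>ys. ys \<noteq> [] \<and> distinct ys \<and> set ys \<subseteq> set xs \<and> pe ys \<subseteq> pe xs
   \<and> hd ys = hd xs \<and> last ys = last xs"
proof (induction xs)
  case (Cons x xs)
  show ?case
  proof (cases "xs = []")
    case True then show ?thesis by (intro exI[of _ "[x]"]) simp
  next
    case False
    then obtain ys where ys: "ys \<noteq> []" "distinct ys" "set ys \<subseteq> set xs" "pe ys \<subseteq> pe xs"
      "hd ys = hd xs" "last ys = last xs" using Cons.IH by blast
    show ?thesis
    proof (cases "x \<in> set ys")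
      case False
      obtain y ys' where yy: "ys = y # ys'" using ys(1) by (cases ys) auto
      obtain z zs where zz: "xs = z # zs" using \<open>xs \<noteq> []\<close> by (cases xs) auto
      show ?thesis using ys False
        by (intro exI[of _ "x#ys"]) (auto simp: yy zz)
    next
      case True
      then obtain a b where ab: "ys = a @ x # b" by (meson split_list)
      have "pe (x#b) \<subseteq> pe ys" unfolding ab by (rule pe_suffix)
      moreover have "pe xs \<subseteq> pe (x#xs)" using pe_suffix[of xs "[x]"] by simp
      ultimately show ?thesis using ys \<open>xs \<noteq> []\<close>
        by (intro exI[of _ "x#b"]) (auto simp: ab)
    qed
  qed
qed simp



lemma match_mset:
  "image_mset f M = image_mset g N \<Longrightarrow>
   \<exists>R. image_mset fst R = M \<and> image_mset snd R = N \<and> (\<forall>r\<in>#R. f (fst r) = g (snd r))"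
proof (induction M arbitrary: N)
  case empty then show ?case by (intro exI[of _ "{#}"]) simp
next
  case (add x M)
  have "f x \<in># image_mset g N" using add.prems by (metis image_mset_add_mset union_single_eq_member)
  then obtain y where y: "y \<in># N" "g y = f x" by auto
  then obtain N' where N': "N = add_mset y N'" by (metis multi_member_split)
  have "image_mset f M = image_mset g N'" using add.prems y N' by simp
  then obtain R where R: "image_mset fst R = M" "image_mset snd R = N'" "\<forall>r\<in>#R. f (fst r) = g (snd r)"
    using add.IH by blast
  show ?case using R y N' by (intro exI[of _ "add_mset (x,y) R"]) auto
qed

definition ecut :: "'a set set \<Rightarrow> 'a set \<Rightarrow> 'a set set" where
  "ecut E X = {e\<in>E. \<exists>u v. e = {u,v} \<and> u \<in> X \<and> v \<notin> X}"

definition cnt :: "'a multiset \<Rightarrow> 'a set \<Rightarrow> nat" where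
  "cnt M X = size (filter_mset (\<lambda>v. v \<in> X) M)"

definition cntE :: "'a list multiset \<Rightarrow> 'a set \<Rightarrow> nat" where
  "cntE M e = size (filter_mset (\<lambda>p. e \<in> pe p) M)"

lemma cntE_plus[simp]: "cntE (M + N) e = cntE M e + cntE N e"
  by (simp add: cntE_def)

lemma cntE_zero: "(\<And>p. p \<in># M \<Longrightarrow> e \<notin> pe p) \<Longrightarrow> cntE M e = 0"
  unfolding cntE_def by simp

lemma cntE_le_sub: "M \<subseteq># N \<Longrightarrow> cntE M e \<le> cntE N e"
  unfolding cntE_def by (simp add: multiset_filter_mono size_mset_mono)

lemma cnt_plus[simp]: "cnt (M + N) X = cnt M X + cnt N X"
  by (simp add: cnt_def)

lemma cnt_split: "set_mset A \<subseteq> V \<Longrightarrow> cnt A X + cnt A (V - X) = size A"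
proof -
  assume a: "set_mset A \<subseteq> V"
  have "filter_mset (\<lambda>v. v \<in> V - X) A = filter_mset (\<lambda>v. v \<notin> X) A"
    using a by (intro filter_mset_cong) auto
  then show ?thesis unfolding cnt_def
    by (metis multiset_partition size_union)
qed

lemma cnt_V: "set_mset A \<subseteq> V \<Longrightarrow> cnt A V = size A"
  unfolding cnt_def by (metis filter_mset_True filter_mset_cong subset_iff)

lemma finite_E: "simple_graph V E \<Longrightarrow> finite E"
proof -
  assume s: "simple_graph V E"
  then have "E \<subseteq> Pow V" unfolding simple_graph_def by auto
  then show ?thesis using s unfolding simple_graph_def by (meson finite_Pow_iff rev_finite_subset)
qed



definition xe :: "'a set \<Rightarrow> 'a set \<Rightarrow> 'a" where "xe X f = (SOME u. u \<in> f \<and> u \<in> X)"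
definition ye :: "'a set \<Rightarrow> 'a set \<Rightarrow> 'a" where "ye X f = (SOME u. u \<in> f \<and> u \<notin> X)"

lemma xye: "u \<in> X \<Longrightarrow> v \<notin> X \<Longrightarrow> xe X {u,v} = u \<and> ye X {u,v} = v"
  unfolding xe_def ye_def by (intro conjI some_equality) auto

lemma cut_char: "f \<in> ecut E X \<Longrightarrow> f \<in> E \<and> f = {xe X f, ye X f} \<and> xe X f \<in> X \<and> ye X f \<notin> X"
proof -
  assume "f \<in> ecut E X"
  then obtain u v where f: "f \<in> E" "f = {u,v}" "u \<in> X" "v \<notin> X" unfolding ecut_def by blast
  then have "xe X f = u" "ye X f = v" using xye[of u X v] by auto
  then show ?thesis using f by simp
qed

lemma size_filter_image: "size {#x \<in># image_mset f M. P x#} = size {#x \<in># M. P (f x)#}"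
  by (simp add: filter_mset_image_mset)

lemma cnt_image_mset_set: "finite F \<Longrightarrow> cnt (image_mset g (mset_set F)) Z = card {f\<in>F. g f \<in> Z}"
  unfolding cnt_def by (simp add: size_filter_image)

lemma cnt_filter: "Z \<subseteq> X \<Longrightarrow> cnt (filter_mset (\<lambda>v. v \<in> X) A) Z = cnt A Z"
  unfolding cnt_def filter_filter_mset by (rule arg_cong[where f=size], rule filter_mset_cong) auto

lemma cnt_disj: "Z \<inter> X = {} \<Longrightarrow> cnt A (Z \<union> X) = cnt A Z + cnt A X"
proof -
  assume d: "Z \<inter> X = {}"
  have "cnt A (Z \<union> X) = size (filter_mset (\<lambda>v. v \<in> Z \<union> X) A)" by (simp add: cnt_def)
  also have "filter_mset (\<lambda>v. v \<in> Z \<union> X) A = filter_mset (\<lambda>v. v \<in> Z) (filter_mset (\<lambda>v. v \<in> Z \<union> X) A)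
     + filter_mset (\<lambda>v. \<not> v \<in> Z) (filter_mset (\<lambda>v. v \<in> Z \<union> X) A)"
    by (rule multiset_partition)
  also have "filter_mset (\<lambda>v. v \<in> Z) (filter_mset (\<lambda>v. v \<in> Z \<union> X) A) = filter_mset (\<lambda>v. v \<in> Z) A"
    unfolding filter_filter_mset by (rule filter_mset_cong) auto
  also have "filter_mset (\<lambda>v. \<not> v \<in> Z) (filter_mset (\<lambda>v. v \<in> Z \<union> X) A) = filter_mset (\<lambda>v. v \<in> X) A"
    unfolding filter_filter_mset using d by (intro filter_mset_cong) auto
  finally show ?thesis by (simp add: cnt_def)
qed

lemma filter_split_V: "set_mset A \<subseteq> V \<Longrightarrow> filter_mset (\<lambda>v. v \<in> X) A + filter_mset (\<lambda>v. v \<in> V - X) A = A"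
proof -
  assume a: "set_mset A \<subseteq> V"
  have "filter_mset (\<lambda>v. v \<in> V - X) A = filter_mset (\<lambda>v. \<not> v \<in> X) A"
    using a by (intro filter_mset_cong) auto
  then show ?thesis by (metis multiset_partition)
qed



lemma cutI: "e \<in> E \<Longrightarrow> e = {u,v} \<Longrightarrow> u \<in> X \<Longrightarrow> v \<notin> X \<Longrightarrow> e \<in> ecut E X"
  unfolding ecut_def by blast

lemma cutE: "e \<in> ecut E X \<Longrightarrow> (\<And>u v. e \<in> E \<Longrightarrow> e = {u,v} \<Longrightarrow> u \<in> X \<Longrightarrow> v \<notin> X \<Longrightarrow> P) \<Longrightarrow> P"
  unfolding ecut_def by blast

lemma cond_X:
  assumes sg: "simple_graph V E" and XV: "X \<subseteq> V" and ZX: "Z \<subseteq> X"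
    and cond: "\<forall>Y. Y \<subseteq> V \<longrightarrow> cnt A Y \<le> cnt B Y + card (ecut E Y)"
  shows "cnt (filter_mset (\<lambda>v. v \<in> X) A) Z \<le>
     cnt (filter_mset (\<lambda>v. v \<in> X) B + image_mset (xe X) (mset_set (ecut E X))) Z + card (ecut {e\<in>E. e \<subseteq> X} Z)"
proof -
  let ?F = "ecut E X"
  let ?C = "ecut {e\<in>E. e \<subseteq> X} Z"
  have fE: "finite E" using finite_E[OF sg] .
  have fF: "finite ?F" using fE unfolding ecut_def by simp
  have f1: "finite ?C" using fE unfolding ecut_def by simp
  have sub: "ecut E Z \<subseteq> ?C \<union> {f\<in>?F. xe X f \<in> Z}"
  proof
    fix e assume "e \<in> ecut E Z"
    then obtain u v where e: "e \<in> E" "e = {u,v}" "u \<in> Z" "v \<notin> Z" by (rule cutE)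
    have uX: "u \<in> X" using e(3) ZX by blast
    show "e \<in> ?C \<union> {f\<in>?F. xe X f \<in> Z}"
    proof (cases "v \<in> X")
      case True
      then have "e \<subseteq> X" using uX e(2) by simp
      then have "e \<in> ?C" using e by (intro cutI[of e _ u v]) auto
      then show ?thesis by (rule UnI1)
    next
      case False
      then have "e \<in> ?F" using e uX by (intro cutI[of e _ u v]) auto
      moreover have "xe X e = u" using xye[of u X v] e(2) uX False by simp
      ultimately show ?thesis using e(3) by simp
    qed
  qed
  have "card (ecut E Z) \<le> card (?C \<union> {f\<in>?F. xe X f \<in> Z})"
    by (rule card_mono) (use sub f1 fF in simp_all)
  also have "\<dots> \<le> card ?C + card {f\<in>?F. xe X f \<in> Z}" by (rule card_Un_le)
  finally have c1: "card (ecut E Z) \<le> card ?C + card {f\<in>?F. xe X f \<in> Z}" .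
  have c2: "cnt A Z \<le> cnt B Z + card (ecut E Z)" using cond ZX XV by auto
  have c3: "cnt (filter_mset (\<lambda>v. v \<in> X) B + image_mset (xe X) (mset_set ?F)) Z
      = cnt B Z + card {f\<in>?F. xe X f \<in> Z}"
    unfolding cnt_plus cnt_filter[OF ZX] cnt_image_mset_set[OF fF] ..
  show ?thesis unfolding c3 cnt_filter[OF ZX] using c1 c2 by linarith
qed



lemma cond_Y:
  assumes sg: "simple_graph V E" and XV: "X \<subseteq> V" and ZY: "Z \<subseteq> V - X"
    and cond: "\<forall>Y. Y \<subseteq> V \<longrightarrow> cnt A Y \<le> cnt B Y + card (ecut E Y)"
    and tight: "cnt B X + card (ecut E X) \<le> cnt A X"
  shows "cnt (filter_mset (\<lambda>v. v \<in> V - X) A + image_mset (ye X) (mset_set (ecut E X))) Z \<le>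
     cnt (filter_mset (\<lambda>v. v \<in> V - X) B) Z + card (ecut {e\<in>E. e \<subseteq> V - X} Z)"
proof -
  let ?F = "ecut E X"
  let ?C = "ecut {e\<in>E. e \<subseteq> V - X} Z"
  let ?P = "{f\<in>?F. ye X f \<in> Z}"
  let ?N = "{f\<in>?F. ye X f \<notin> Z}"
  have fE: "finite E" using finite_E[OF sg] .
  have fF: "finite ?F" using fE unfolding ecut_def by simp
  have f1: "finite ?C" using fE unfolding ecut_def by simp
  have sub: "ecut E (Z \<union> X) \<subseteq> ?C \<union> ?N"
  proof
    fix e assume "e \<in> ecut E (Z \<union> X)"
    then obtain u v where e: "e \<in> E" "e = {u,v}" "u \<in> Z \<union> X" "v \<notin> Z \<union> X" by (rule cutE)
    have uv: "u \<in> V" "v \<in> V" using sg e(1,2) unfolding simple_graph_def by (metis doubleton_eq_iff)+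
    show "e \<in> ?C \<union> ?N"
    proof (cases "u \<in> X")
      case False
      then have "u \<in> Z" using e(3) by simp
      then have "e \<subseteq> V - X" using uv e(2,4) ZY by auto
      then have "e \<in> ?C" using e \<open>u \<in> Z\<close> by (intro cutI[of e _ u v]) auto
      then show ?thesis by (rule UnI1)
    next
      case True
      then have "e \<in> ?F" using e by (intro cutI[of e _ u v]) auto
      moreover have "ye X e = v" using xye[of u X v] e(2,4) True by simp
      ultimately show ?thesis using e(4) by simp
    qed
  qed
  have "card (ecut E (Z \<union> X)) \<le> card (?C \<union> ?N)"
    by (rule card_mono) (use sub f1 fF in simp_all)
  also have "\<dots> \<le> card ?C + card ?N" by (rule card_Un_le)
  finally have c1: "card (ecut E (Z \<union> X)) \<le> card ?C + card ?N" .
  have c4: "card ?P + card ?N = card ?F"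
  proof -
    have "?F = ?P \<union> ?N" by blast
    moreover have "card (?P \<union> ?N) = card ?P + card ?N"
      by (rule card_Un_disjoint) (use fF in auto)
    ultimately show ?thesis by simp
  qed
  have c2: "cnt A (Z \<union> X) \<le> cnt B (Z \<union> X) + card (ecut E (Z \<union> X))"
  proof -
    have "Z \<union> X \<subseteq> V" using ZY XV by auto
    then show ?thesis using cond by blast
  qed
  have d: "Z \<inter> X = {}" using ZY by auto
  have c3: "cnt (filter_mset (\<lambda>v. v \<in> V - X) A + image_mset (ye X) (mset_set ?F)) Z
      = cnt A Z + card ?P"
    unfolding cnt_plus cnt_filter[OF ZY] cnt_image_mset_set[OF fF] ..
  show ?thesis unfolding c3 cnt_filter[OF ZY]
    using c1 c2 c4 cnt_disj[OF d, of A] cnt_disj[OF d, of B] tight by linarith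
qed


lemma cut_xe: "f \<in> ecut E X \<Longrightarrow> xe X f \<in> X"
proof -
  assume "f \<in> ecut E X"
  then obtain u v where f: "f \<in> E" "f = {u,v}" "u \<in> X" "v \<notin> X" by (rule cutE)
  then have "xe X f = u" using xye[of u X v] by simp
  then show ?thesis using f(3) by simp
qed

lemma sg_sub: "simple_graph V E \<Longrightarrow> e \<in> E \<Longrightarrow> e \<subseteq> V"
proof -
  assume "simple_graph V E" "e \<in> E"
  then obtain u v where "u \<in> V" "v \<in> V" "e = {u,v}" unfolding simple_graph_def by blast
  then show ?thesis by simp
qed

lemma cut_ye: "simple_graph V E \<Longrightarrow> f \<in> ecut E X \<Longrightarrow> ye X f \<in> V - X"
proof -
  assume sg: "simple_graph V E" and fc: "f \<in> ecut E X"
  from fc obtain u v where f: "f \<in> E" "f = {u,v}" "u \<in> X" "v \<notin> X" by (rule cutE)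
  then have "ye X f = v" using xye[of u X v] by simp
  moreover have "v \<in> V" using sg_sub[OF sg f(1)] f(2) by simp
  ultimately show ?thesis using f(4) by simp
qed



lemma size_filter_or3:
  "(\<And>x. x \<in># M \<Longrightarrow> P x \<Longrightarrow> Q1 x \<or> Q2 x \<or> Q3 x) \<Longrightarrow>
   size (filter_mset P M) \<le> size (filter_mset Q1 M) + size (filter_mset Q2 M) + size (filter_mset Q3 M)"
proof (induction M)
  case (add x M)
  then have "size (filter_mset P M) \<le> size (filter_mset Q1 M) + size (filter_mset Q2 M) + size (filter_mset Q3 M)"
    by auto
  moreover have "P x \<Longrightarrow> Q1 x \<or> Q2 x \<or> Q3 x" using add.prems by auto
  ultimately show ?case by auto
qed simp

lemma pe_nonempty: "e \<in> pe p \<Longrightarrow> e \<noteq> {}"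
  by (induction p rule: pe.induct) auto

lemma wk_sub: "wk V' E' p \<Longrightarrow> e \<in> pe p \<Longrightarrow> e \<in> E'"
  unfolding wk_def by blast

lemma wk_mono: "wk V' E' p \<Longrightarrow> V' \<subseteq> V \<Longrightarrow> E' \<subseteq> E \<Longrightarrow> wk V E p"
  unfolding wk_def by blast

lemma size_filter_eq: "size {#y \<in># D. y = x#} = count D x"
  by (simp add: filter_eq_replicate_mset)

lemma combine:
  assumes sg: "simple_graph V E" and XV: "X \<subseteq> V"
    and A: "set_mset A \<subseteq> V" and B: "set_mset B \<subseteq> V"
    and P1w: "\<forall>p\<in>#Ps1. wk X {e\<in>E. e \<subseteq> X} p" and P1d: "\<forall>e. cntE Ps1 e \<le> 1"
    and P1h: "image_mset hd Ps1 = filter_mset (\<lambda>v. v\<in>X) A"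
    and P1l: "image_mset last Ps1 = filter_mset (\<lambda>v. v\<in>X) B + image_mset (xe X) (mset_set (ecut E X))"
    and P2w: "\<forall>p\<in>#Ps2. wk (V-X) {e\<in>E. e \<subseteq> V-X} p" and P2d: "\<forall>e. cntE Ps2 e \<le> 1"
    and P2h: "image_mset hd Ps2 = filter_mset (\<lambda>v. v\<in>V-X) A + image_mset (ye X) (mset_set (ecut E X))"
    and P2l: "image_mset last Ps2 = filter_mset (\<lambda>v. v\<in>V-X) B"
  shows "\<exists>Ps. (\<forall>p\<in>#Ps. wk V E p) \<and> (\<forall>e. cntE Ps e \<le> 1) \<and> image_mset hd Ps = A \<and> image_mset last Ps = B"
proof -
  let ?F = "ecut E X"
  have fE: "finite E" using finite_E[OF sg] .
  have fF: "finite ?F" using fE unfolding ecut_def by simp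
  obtain Q1 M2 where Q1M2: "Ps1 = Q1 + M2" "filter_mset (\<lambda>v. v\<in>X) B = image_mset last Q1"
     "image_mset (xe X) (mset_set ?F) = image_mset last M2"
    using image_mset_eq_plusD[OF P1l] by blast
  obtain Q2 Z1 where Q2Z1: "Ps2 = Q2 + Z1" "filter_mset (\<lambda>v. v\<in>V-X) A = image_mset hd Q2"
     "image_mset (ye X) (mset_set ?F) = image_mset hd Z1"
    using image_mset_eq_plusD[OF P2h] by blast
  obtain R1 where R1: "image_mset fst R1 = M2" "image_mset snd R1 = mset_set ?F"
      "\<forall>r\<in>#R1. last (fst r) = xe X (snd r)"
    using match_mset[of last M2 "xe X" "mset_set ?F"] Q1M2(3) by metis
  have "image_mset (\<lambda>r. ye X (snd r)) R1 = image_mset (ye X) (image_mset snd R1)"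
    by (simp add: multiset.map_comp o_def)
  then have "image_mset (\<lambda>r. ye X (snd r)) R1 = image_mset hd Z1"
    using R1(2) Q2Z1(3) by simp
  then obtain R where R: "image_mset fst R = R1" "image_mset snd R = Z1"
      "\<forall>r\<in>#R. ye X (snd (fst r)) = hd (snd r)"
    using match_mset[of "\<lambda>r. ye X (snd r)" R1 hd Z1] by blast
  define glue where "glue r = fst (fst r) @ snd r" for r :: "('a list \<times> 'a set) \<times> 'a list"
  define G where "G = image_mset glue R"
  have M2R: "M2 = image_mset (\<lambda>r. fst (fst r)) R"
  proof -
    have "M2 = image_mset fst (image_mset fst R)" using R(1) R1(1) by simp
    also have "\<dots> = image_mset (\<lambda>r. fst (fst r)) R" by (simp add: multiset.map_comp comp_def)
    finally show ?thesis .
  qed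
  have FR: "mset_set ?F = image_mset (\<lambda>r. snd (fst r)) R"
  proof -
    have "mset_set ?F = image_mset snd (image_mset fst R)" using R(1) R1(2) by simp
    also have "\<dots> = image_mset (\<lambda>r. snd (fst r)) R" by (simp add: multiset.map_comp comp_def)
    finally show ?thesis .
  qed
  have rf: "fst (fst r) \<in># M2 \<and> snd (fst r) \<in> ?F \<and> snd r \<in># Z1 \<and> last (fst (fst r)) = xe X (snd (fst r))
     \<and> ye X (snd (fst r)) = hd (snd r)" if r: "r \<in># R" for r
  proof -
    have "fst r \<in># R1" using R(1) r by force
    have "fst (fst r) \<in># M2" using R1(1) \<open>fst r \<in># R1\<close> by force
    moreover have "snd (fst r) \<in># image_mset snd R1" using \<open>fst r \<in># R1\<close> by simp
    then have "snd (fst r) \<in># mset_set ?F" using R1(2) by simp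
    moreover have "last (fst (fst r)) = xe X (snd (fst r))" using R1(3) \<open>fst r \<in># R1\<close> by blast
    moreover have "snd r \<in># Z1" using R(2) r by force
    ultimately show ?thesis using R(3) r fF by simp
  qed
  have w1: "wk X {e\<in>E. e \<subseteq> X} p" if "p \<in># Q1 + M2" for p using P1w Q1M2(1) that by simp
  have w2: "wk (V-X) {e\<in>E. e \<subseteq> V-X} p" if "p \<in># Q2 + Z1" for p using P2w Q2Z1(1) that by simp
  have glue_pe: "pe (glue r) = pe (fst (fst r)) \<union> pe (snd r) \<union> {snd (fst r)}" and glue_ne: "fst (fst r) \<noteq> []" "snd r \<noteq> []"
    if r: "r \<in># R" for r
  proof -
    have p: "wk X {e\<in>E. e \<subseteq> X} (fst (fst r))" using w1 rf[OF r] by simp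
    have q: "wk (V-X) {e\<in>E. e \<subseteq> V-X} (snd r)" using w2 rf[OF r] by simp
    show ne: "fst (fst r) \<noteq> []" "snd r \<noteq> []" using p q unfolding wk_def by auto
    have "snd (fst r) = {xe X (snd (fst r)), ye X (snd (fst r))}" using cut_char rf[OF r] by blast
    then have "{last (fst (fst r)), hd (snd r)} = snd (fst r)" using rf[OF r] by simp
    then show "pe (glue r) = pe (fst (fst r)) \<union> pe (snd r) \<union> {snd (fst r)}"
      unfolding glue_def using pe_append[OF ne] by simp
  qed
  define Ps where "Ps = Q1 + Q2 + G"
  have walks: "\<forall>p\<in>#Ps. wk V E p"
  proof
    fix p assume "p \<in># Ps"
    then consider "p \<in># Q1" | "p \<in># Q2" | "p \<in># G" unfolding Ps_def by auto
    then show "wk V E p"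
    proof cases
      case 1
      then have "wk X {e\<in>E. e \<subseteq> X} p" using w1 by simp
      then show ?thesis by (rule wk_mono) (use XV in auto)
    next
      case 2
      then have "wk (V-X) {e\<in>E. e \<subseteq> V-X} p" using w2 by simp
      then show ?thesis by (rule wk_mono) auto
    next
      case 3
      then obtain r where r: "r \<in># R" "p = glue r" unfolding G_def by auto
      have pw: "wk X {e\<in>E. e \<subseteq> X} (fst (fst r))" using w1 rf[OF r(1)] by simp
      have qw: "wk (V-X) {e\<in>E. e \<subseteq> V-X} (snd r)" using w2 rf[OF r(1)] by simp
      have "snd (fst r) \<in> E" using cut_char rf[OF r(1)] by blast
      have "pe p \<subseteq> E" using pw qw \<open>snd (fst r) \<in> E\<close> glue_pe[OF r(1)] unfolding wk_def r(2) by blast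
      moreover have "set p \<subseteq> V" using pw qw XV unfolding wk_def r(2) glue_def by auto
      moreover have "p \<noteq> []" unfolding r(2) glue_def using glue_ne[OF r(1)] by simp
      ultimately show ?thesis unfolding wk_def by blast
    qed
  qed
  have hdG: "image_mset hd G = image_mset hd M2"
  proof -
    have "image_mset hd G = image_mset (\<lambda>r. hd (fst (fst r))) R"
      unfolding G_def multiset.map_comp o_def
      by (rule image_mset_cong) (simp add: glue_def glue_ne)
    then show ?thesis unfolding M2R by (simp add: multiset.map_comp o_def)
  qed
  have lastG: "image_mset last G = image_mset last Z1"
  proof -
    have "image_mset last G = image_mset (\<lambda>r. last (snd r)) R"
      unfolding G_def multiset.map_comp o_def
      by (rule image_mset_cong) (simp add: glue_def glue_ne)
    then show ?thesis unfolding R(2)[symmetric] by (simp add: multiset.map_comp comp_def)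
  qed
  have hds: "image_mset hd Ps = A"
  proof -
    have "image_mset hd Ps = (image_mset hd Q1 + image_mset hd M2) + image_mset hd Q2"
      unfolding Ps_def using hdG by simp
    also have "\<dots> = filter_mset (\<lambda>v. v\<in>X) A + filter_mset (\<lambda>v. v\<in>V-X) A"
      using P1h Q1M2(1) Q2Z1(2) by simp
    finally show ?thesis using filter_split_V[OF A] by simp
  qed
  have lasts: "image_mset last Ps = B"
  proof -
    have "image_mset last Ps = image_mset last Q1 + (image_mset last Q2 + image_mset last Z1)"
      unfolding Ps_def using lastG by simp
    also have "\<dots> = filter_mset (\<lambda>v. v\<in>X) B + filter_mset (\<lambda>v. v\<in>V-X) B"
      using P2l Q2Z1(1) Q1M2(2) by simp
    finally show ?thesis using filter_split_V[OF B] by simp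
  qed
  have disj: "cntE Ps e \<le> 1" for e
  proof -
    have "cntE G e = size (filter_mset (\<lambda>r. e \<in> pe (glue r)) R)"
      unfolding G_def cntE_def size_filter_image ..
    also have "\<dots> \<le> size (filter_mset (\<lambda>r. e \<in> pe (fst (fst r))) R) + size (filter_mset (\<lambda>r. e \<in> pe (snd r)) R)
        + size (filter_mset (\<lambda>r. snd (fst r) = e) R)"
      by (rule size_filter_or3) (use glue_pe in auto)
    also have "size (filter_mset (\<lambda>r. e \<in> pe (fst (fst r))) R) = cntE M2 e"
      unfolding M2R cntE_def size_filter_image ..
    also have "size (filter_mset (\<lambda>r. e \<in> pe (snd r)) R) = cntE Z1 e"
      unfolding R(2)[symmetric] cntE_def size_filter_image ..
    also have "size (filter_mset (\<lambda>r. snd (fst r) = e) R) = count (mset_set ?F) e"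
      unfolding FR size_filter_eq[symmetric] size_filter_image ..
    finally have cG: "cntE G e \<le> cntE M2 e + cntE Z1 e + count (mset_set ?F) e" .
    have cF: "count (mset_set ?F) e \<le> 1" by (simp add: count_mset_set')
    have inX: "e \<subseteq> X \<and> e \<noteq> {}" if "p \<in># Q1 + M2" "e \<in> pe p" for p
      using wk_sub[OF w1[OF that(1)] that(2)] pe_nonempty[OF that(2)] by simp
    have inY: "e \<subseteq> V - X \<and> e \<noteq> {}" if "p \<in># Q2 + Z1" "e \<in> pe p" for p
      using wk_sub[OF w2[OF that(1)] that(2)] pe_nonempty[OF that(2)] by simp
    have sub1: "Q1 \<subseteq># Q1 + M2" "M2 \<subseteq># Q1 + M2" "Q2 \<subseteq># Q2 + Z1" "Z1 \<subseteq># Q2 + Z1" by simp_all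
    have Ps1c: "cntE Q1 e + cntE M2 e \<le> 1" using P1d[rule_format, of e] unfolding Q1M2(1) cntE_plus .
    have Ps2c: "cntE Q2 e + cntE Z1 e \<le> 1" using P2d[rule_format, of e] unfolding Q2Z1(1) cntE_plus .
    have cPs: "cntE Ps e = cntE Q1 e + cntE Q2 e + cntE G e" unfolding Ps_def by simp
    show ?thesis
    proof (cases "e \<subseteq> X")
      case True
      have "cntE Q2 e = 0" "cntE Z1 e = 0" using inY True by (auto intro!: cntE_zero)
      moreover have "e \<notin> ?F"
      proof
        assume "e \<in> ?F"
        then have "e = {xe X e, ye X e}" "ye X e \<notin> X" using cut_char by blast+
        then show False using True by blast
      qed
      then have "count (mset_set ?F) e = 0" by simp
      ultimately show ?thesis using cPs cG Ps1c by linarith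
    next
      case nX: False
      show ?thesis
      proof (cases "e \<subseteq> V - X")
        case True
        have "cntE Q1 e = 0" "cntE M2 e = 0" using inX nX by (auto intro!: cntE_zero)
        moreover have "e \<notin> ?F"
        proof
          assume "e \<in> ?F"
          then have "e = {xe X e, ye X e}" "xe X e \<in> X" using cut_char by blast+
          then show False using True by blast
        qed
        then have "count (mset_set ?F) e = 0" by simp
        ultimately show ?thesis using cPs cG Ps2c by linarith
      next
        case False
        have "cntE Q1 e = 0" "cntE M2 e = 0" using inX nX by (auto intro!: cntE_zero)
        moreover have "cntE Q2 e = 0" "cntE Z1 e = 0" using inY False by (auto intro!: cntE_zero)
        ultimately show ?thesis using cPs cG cF by linarith
      qed
    qed
  qed
  show ?thesis using walks disj hds lasts by blast
qed



lemma cnt_pos: "0 < cnt B X \<Longrightarrow> \<exists>b. b \<in># B \<and> b \<in> X"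
proof -
  assume "0 < cnt B X"
  then have "filter_mset (\<lambda>v. v\<in>X) B \<noteq> {#}" unfolding cnt_def by (metis less_irrefl size_empty)
  then show ?thesis by auto
qed

lemma cnt_mem: "a \<in># A \<Longrightarrow> a \<in> X \<Longrightarrow> 0 < cnt A X"
proof -
  assume "a \<in># A" "a \<in> X"
  then have "filter_mset (\<lambda>v. v\<in>X) A \<noteq> {#}" by auto
  then show ?thesis unfolding cnt_def by (metis gr0I size_eq_0_iff_empty)
qed

lemma menger:
  assumes "simple_graph V E" "set_mset A \<subseteq> V" "set_mset B \<subseteq> V" "size A = size B"
    "\<forall>X. X \<subseteq> V \<longrightarrow> cnt A X \<le> cnt B X + card (ecut E X)"
  shows "\<exists>Ps. (\<forall>p\<in>#Ps. wk V E p) \<and> (\<forall>e. cntE Ps e \<le> 1) \<and> image_mset hd Ps = A \<and> image_mset last Ps = B"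
  using assms
proof (induction "card V + card E + size A" arbitrary: V E A B rule: less_induct)
  case less
  note sg = less.prems(1) and AV = less.prems(2) and BV = less.prems(3) and sz = less.prems(4)
    and cond = less.prems(5)
  have fV: "finite V" using sg unfolding simple_graph_def by blast
  have fE: "finite E" using finite_E[OF sg] .
  show ?case
  proof (cases "A = {#}")
    case True
    then have "B = {#}" using sz by simp
    then show ?thesis using True by (intro exI[of _ "{#}"]) (simp add: cntE_def)
  next
    case Ane: False
    show ?thesis
    proof (cases "\<exists>v. v \<in># A \<and> v \<in># B")
      case True
      then obtain v where v: "v \<in># A" "v \<in># B" by blast
      obtain A' where A': "A = add_mset v A'" using v(1) by (metis multi_member_split)
      obtain B' where B': "B = add_mset v B'" using v(2) by (metis multi_member_split)
      have c': "\<forall>X. X \<subseteq> V \<longrightarrow> cnt A' X \<le> cnt B' X + card (ecut E X)"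
      proof (intro allI impI)
        fix X assume "X \<subseteq> V"
        then have "cnt A X \<le> cnt B X + card (ecut E X)" using cond by blast
        then show "cnt A' X \<le> cnt B' X + card (ecut E X)" unfolding A' B' cnt_def by (cases "v \<in> X") auto
      qed
      have lt: "card V + card E + size A' < card V + card E + size A" using A' by simp
      have "set_mset A' \<subseteq> V" "set_mset B' \<subseteq> V" "size A' = size B'" using AV BV sz A' B' by auto
      then obtain Ps where Ps: "\<forall>p\<in>#Ps. wk V E p" "\<forall>e. cntE Ps e \<le> 1" "image_mset hd Ps = A'"
          "image_mset last Ps = B'"
        using less.hyps[OF lt sg _ _ _ c'] by blast
      have "v \<in> V" using v AV by auto
      then have "wk V E [v]" unfolding wk_def by simp
      moreover have "cntE (add_mset [v] Ps) e = cntE Ps e" for e by (simp add: cntE_def)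
      ultimately show ?thesis using Ps A' B' by (intro exI[of _ "add_mset [v] Ps"]) auto
    next
      case nocommon: False
      show ?thesis
      proof (cases "\<exists>X. X \<subseteq> V \<and> X \<noteq> {} \<and> X \<noteq> V \<and> cnt B X + card (ecut E X) \<le> cnt A X")
        case True
        then obtain X where X: "X \<subseteq> V" "X \<noteq> {}" "X \<noteq> V" "cnt B X + card (ecut E X) \<le> cnt A X" by blast
        let ?F = "ecut E X"
        have fF: "finite ?F" using fE unfolding ecut_def by simp
        let ?E1 = "{e\<in>E. e \<subseteq> X}" and ?E2 = "{e\<in>E. e \<subseteq> V - X}"
        let ?A1 = "filter_mset (\<lambda>v. v\<in>X) A" and ?B1 = "filter_mset (\<lambda>v. v\<in>X) B + image_mset (xe X) (mset_set ?F)"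
        let ?A2 = "filter_mset (\<lambda>v. v\<in>V-X) A + image_mset (ye X) (mset_set ?F)" and ?B2 = "filter_mset (\<lambda>v. v\<in>V-X) B"
        have sg1: "simple_graph X ?E1" unfolding simple_graph_def
        proof (intro conjI ballI)
          show "finite X" using finite_subset[OF X(1) fV] .
          fix e assume e: "e \<in> ?E1"
          then have eE: "e \<in> E" and eX: "e \<subseteq> X" by auto
          obtain u v where uv: "u \<noteq> v" "e = {u,v}" using sg eE unfolding simple_graph_def by blast
          have "u \<in> X" "v \<in> X" using uv(2) eX by auto
          then show "\<exists>u v. u \<noteq> v \<and> u \<in> X \<and> v \<in> X \<and> e = {u, v}" using uv by blast
        qed
        have sg2: "simple_graph (V - X) ?E2" unfolding simple_graph_def
        proof (intro conjI ballI)
          show "finite (V - X)" using fV by simp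
          fix e assume e: "e \<in> ?E2"
          then have eE: "e \<in> E" and eX: "e \<subseteq> V - X" by auto
          obtain u v where uv: "u \<noteq> v" "e = {u,v}" using sg eE unfolding simple_graph_def by blast
          have "u \<in> V - X" "v \<in> V - X" using uv(2) eX by auto
          then show "\<exists>u v. u \<noteq> v \<and> u \<in> V - X \<and> v \<in> V - X \<and> e = {u, v}" using uv by blast
        qed
        have "cnt A X \<le> cnt B X + card ?F" using cond X(1) by blast
        then have tight: "cnt A X = cnt B X + card ?F" using X(4) by linarith
        have spA: "cnt A X + cnt A (V - X) = size A" using cnt_split[OF AV] .
        have spB: "cnt B X + cnt B (V - X) = size B" using cnt_split[OF BV] .
        have szA1: "size ?A1 = cnt A X" by (simp add: cnt_def)
        have szB1: "size ?B1 = cnt B X + card ?F" by (simp add: cnt_def)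
        have szA2: "size ?A2 = cnt A (V - X) + card ?F" by (simp add: cnt_def)
        have szB2: "size ?B2 = cnt B (V - X)" by (simp add: cnt_def)
        have "X \<subset> V" using X(1,3) by blast
        then have cX: "card X < card V" using fV by (rule psubset_card_mono[rotated])
        have "V - X \<subset> V" using X(1,2) by blast
        then have cY: "card (V - X) < card V" using fV by (rule psubset_card_mono[rotated])
        have cE1: "card ?E1 \<le> card E" using fE by (intro card_mono) auto
        have cE2: "card ?E2 \<le> card E" using fE by (intro card_mono) auto
        have m1: "card X + card ?E1 + size ?A1 < card V + card E + size A"
          using cX cE1 szA1 spA by linarith
        have m2: "card (V - X) + card ?E2 + size ?A2 < card V + card E + size A"
          using cY cE2 szA2 spA spB sz tight by linarith
        have s1: "set_mset ?A1 \<subseteq> X" by (rule subsetI) simp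
        have xin: "xe X f \<in> X" if "f \<in> ?F" for f using cut_xe[OF that] .
        have yin: "ye X f \<in> V - X" if "f \<in> ?F" for f using cut_ye[OF sg that] .
        have sF: "set_mset (mset_set ?F) = ?F" using fF by (rule finite_set_mset_mset_set)
        have s2: "set_mset ?B1 \<subseteq> X"
        proof -
          have "set_mset ?B1 = set_mset (filter_mset (\<lambda>v. v\<in>X) B) \<union> xe X ` ?F"
            by (simp only: set_mset_union set_image_mset sF)
          also have "\<dots> \<subseteq> X" using xin by (intro Un_least image_subsetI) auto
          finally show ?thesis .
        qed
        have s3: "set_mset ?A2 \<subseteq> V - X"
        proof -
          have "set_mset ?A2 = set_mset (filter_mset (\<lambda>v. v\<in>V-X) A) \<union> ye X ` ?F"
            by (simp only: set_mset_union set_image_mset sF)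
          also have "\<dots> \<subseteq> V - X" using yin by (intro Un_least image_subsetI) auto
          finally show ?thesis .
        qed
        have s4: "set_mset ?B2 \<subseteq> V - X" by auto
        have z1: "size ?A1 = size ?B1" using szA1 szB1 tight by simp
        have z2: "size ?A2 = size ?B2" using szA2 szB2 tight spA spB sz by linarith
        have c1: "\<forall>Z. Z \<subseteq> X \<longrightarrow> cnt ?A1 Z \<le> cnt ?B1 Z + card (ecut ?E1 Z)"
          using cond_X[OF sg X(1) _ cond] by blast
        have c2: "\<forall>Z. Z \<subseteq> V - X \<longrightarrow> cnt ?A2 Z \<le> cnt ?B2 Z + card (ecut ?E2 Z)"
          using cond_Y[OF sg X(1) _ cond X(4)] by blast
        obtain Ps1 where Ps1: "\<forall>p\<in>#Ps1. wk X ?E1 p" "\<forall>e. cntE Ps1 e \<le> 1" "image_mset hd Ps1 = ?A1"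
          "image_mset last Ps1 = ?B1"
          using less.hyps[OF m1 sg1 s1 s2 z1 c1] by blast
        obtain Ps2 where Ps2: "\<forall>p\<in>#Ps2. wk (V - X) ?E2 p" "\<forall>e. cntE Ps2 e \<le> 1" "image_mset hd Ps2 = ?A2"
          "image_mset last Ps2 = ?B2"
          using less.hyps[OF m2 sg2 s3 s4 z2 c2] by blast
        show ?thesis by (rule combine[OF sg X(1) AV BV Ps1 Ps2])
      next
        case False
        have strict: "cnt A X < cnt B X + card (ecut E X)" if "X \<subseteq> V" "X \<noteq> {}" "X \<noteq> V" for X
        proof (rule ccontr)
          assume "\<not> cnt A X < cnt B X + card (ecut E X)"
          then have "cnt B X + card (ecut E X) \<le> cnt A X" by simp
          then show False using False that by blast
        qed
        show ?thesis
        proof (cases "E = {}")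
          case False
          then obtain e where e: "e \<in> E" by blast
          let ?E' = "E - {e}"
          have sg': "simple_graph V ?E'" using sg unfolding simple_graph_def by blast
          have c': "\<forall>X. X \<subseteq> V \<longrightarrow> cnt A X \<le> cnt B X + card (ecut ?E' X)"
          proof (intro allI impI)
            fix X assume XV: "X \<subseteq> V"
            show "cnt A X \<le> cnt B X + card (ecut ?E' X)"
            proof (cases "X = {} \<or> X = V")
              case True
              then show ?thesis
              proof
                assume "X = {}" then show ?thesis by (simp add: cnt_def)
              next
                assume "X = V" then show ?thesis using cnt_V[OF AV] cnt_V[OF BV] sz by simp
              qed
            next
              case False
              have fin: "finite (ecut ?E' X)" using fE unfolding ecut_def by simp
              have "ecut E X \<subseteq> insert e (ecut ?E' X)" unfolding ecut_def by blast
              then have "card (ecut E X) \<le> card (insert e (ecut ?E' X))" using fin by (intro card_mono) auto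
              also have "\<dots> \<le> card (ecut ?E' X) + 1" using fin by (simp add: card_insert_if)
              finally show ?thesis using strict[OF XV] False by force
            qed
          qed
          have lt: "card V + card ?E' + size A < card V + card E + size A"
            using card_Diff1_less[OF fE e] by simp
          obtain Ps where Ps: "\<forall>p\<in>#Ps. wk V ?E' p" "\<forall>e. cntE Ps e \<le> 1" "image_mset hd Ps = A"
              "image_mset last Ps = B"
            using less.hyps[OF lt sg' AV BV sz c'] by blast
          have "\<forall>p\<in>#Ps. wk V E p" using Ps(1) by (meson Diff_subset order_refl wk_mono)
          then show ?thesis using Ps by blast
        next
          case True
          obtain a where a: "a \<in># A" using Ane by (meson multiset_nonemptyE)
          have aV: "a \<in> V" using AV a by auto
          show ?thesis
          proof (cases "V = {a}")
            case True
            have "B \<noteq> {#}" using Ane sz by auto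
            then obtain b where b: "b \<in># B" by (meson multiset_nonemptyE)
            then have "b = a" using BV True by auto
            then show ?thesis using nocommon a b by blast
          next
            case False
            have "cnt A {a} < cnt B {a} + card (ecut E {a})" using strict[of "{a}"] aV False by blast
            moreover have "ecut E {a} = {}" using \<open>E = {}\<close> unfolding ecut_def by simp
            ultimately have "0 < cnt B {a}" by simp
            then obtain b where "b \<in># B" "b \<in> {a}" using cnt_pos by blast
            then show ?thesis using nocommon a by blast
          qed
        qed
      qed
    qed
  qed
qed



lemma stay_in:
  assumes "wk V E' xs" "\<And>a b. {a,b} \<in> E' \<Longrightarrow> a \<in> X \<Longrightarrow> b \<in> X" "hd xs \<in> X"
  shows "last xs \<in> X"
  using assms
proof (induction xs rule: pe.induct)
  case (3 x y xs)
  have "{x,y} \<in> E'" using "3.prems"(1) unfolding wk_def by simp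
  then have "y \<in> X" using "3.prems"(2,3) by simp
  moreover have "wk V E' (y#xs)" using "3.prems"(1) unfolding wk_def by auto
  ultimately have "last (y#xs) \<in> X" using "3.IH" "3.prems"(2) by simp
  then show ?case by simp
qed (auto simp: wk_def)

lemma cut_disconnecting:
  assumes XV: "X \<subseteq> V" "X \<noteq> {}" "X \<noteq> V"
  shows "disconnecting V E (ecut E X)"
  unfolding disconnecting_def
proof
  show "ecut E X \<subseteq> E" unfolding ecut_def by blast
  show "\<not> connected_graph V (E - ecut E X)"
  proof
    assume c: "connected_graph V (E - ecut E X)"
    obtain u where u: "u \<in> X" using XV(2) by blast
    obtain v where v: "v \<in> V" "v \<notin> X" using XV(1,3) by blast
    have "u \<in> V" using u XV(1) by blast
    then have "reachable V (E - ecut E X) u v" using c v(1) unfolding connected_graph_def by blast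
    then obtain xs where xs: "path V (E - ecut E X) xs" "hd xs = u" "last xs = v"
      unfolding reachable_def by blast
    have w: "wk V (E - ecut E X) xs" using xs(1) walk_wk unfolding path_def by blast
    have "last xs \<in> X"
    proof (rule stay_in[OF w])
      fix a b assume ab: "{a,b} \<in> E - ecut E X" "a \<in> X"
      show "b \<in> X"
      proof (rule ccontr)
        assume "b \<notin> X"
        then have "{a,b} \<in> ecut E X" using ab by (intro cutI[of _ _ a b]) auto
        then show False using ab(1) by blast
      qed
    qed (use xs(2) u in simp)
    then show False using xs(3) v(2) by simp
  qed
qed

lemma cnt_le_size: "cnt A X \<le> size A"
  unfolding cnt_def by simp

definition tp :: "'a list \<Rightarrow> 'a list" where
  "tp p = (SOME ys. ys \<noteq> [] \<and> distinct ys \<and> set ys \<subseteq> set p \<and> pe ys \<subseteq> pe p \<and> hd ys = hd p \<and> last ys = last p)"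

lemma tp: "p \<noteq> [] \<Longrightarrow> tp p \<noteq> [] \<and> distinct (tp p) \<and> set (tp p) \<subseteq> set p \<and> pe (tp p) \<subseteq> pe p
   \<and> hd (tp p) = hd p \<and> last (tp p) = last p"
  unfolding tp_def by (rule someI_ex) (rule walk_to_path)

theorem mainTheorem13:
  fixes V :: "'a set" and E :: "'a set set" and k l q :: nat and col :: "'a set \<Rightarrow> nat"
    and D :: "'a set set" and C :: "'a set" and V1 V2 :: "'a multiset"
  assumes "cozy V E k col"
    and "edge_connectivity V E = 2 * l"
    and "D \<subseteq> E" and "card D = 2 * l"
    and "disconnecting V E D"
    and "card (components V (E - D)) = 2"
    and "C \<in> components V (E - D)"
    and "set_mset V1 \<subseteq> C" and "set_mset V2 \<subseteq> C"
    and "size V1 = q" and "size V2 = q" and "q \<le> l"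
  shows "\<exists>P :: nat \<Rightarrow> 'a list.
           (\<forall>i<q. path V E (P i)) \<and>
           (\<forall>i<q. \<forall>j<q. i \<noteq> j \<longrightarrow> path_edges (P i) \<inter> path_edges (P j) = {}) \<and>
           image_mset (\<lambda>i. hd (P i)) (mset [0..<q]) = V1 \<and>
           image_mset (\<lambda>i. last (P i)) (mset [0..<q]) = V2"
proof -
  have sg: "simple_graph V E" using assms(1) unfolding cozy_def by blast
  have CV: "C \<subseteq> V" using assms(7) unfolding components_def by blast
  have A: "set_mset V1 \<subseteq> V" "set_mset V2 \<subseteq> V" using assms(8,9) CV by auto
  have cond: "\<forall>X. X \<subseteq> V \<longrightarrow> cnt V1 X \<le> cnt V2 X + card (ecut E X)"
  proof (intro allI impI)
    fix X assume XV: "X \<subseteq> V"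
    show "cnt V1 X \<le> cnt V2 X + card (ecut E X)"
    proof (cases "X = {} \<or> X = V")
      case True
      then show ?thesis
      proof
        assume "X = {}" then show ?thesis by (simp add: cnt_def)
      next
        assume "X = V" then show ?thesis using cnt_V[OF A(1)] cnt_V[OF A(2)] assms(10,11) by simp
      qed
    next
      case False
      then have "disconnecting V E (ecut E X)" using cut_disconnecting[OF XV] by blast
      then have "\<exists>F. disconnecting V E F \<and> card F = card (ecut E X)" by blast
      then have "edge_connectivity V E \<le> card (ecut E X)"
        unfolding edge_connectivity_def by (rule Least_le)
      then show ?thesis using cnt_le_size[of V1 X] assms(2,10,12) by linarith
    qed
  qed
  obtain Ps where Ps: "\<forall>p\<in>#Ps. wk V E p" "\<forall>e. cntE Ps e \<le> 1" "image_mset hd Ps = V1"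
      "image_mset last Ps = V2"
    using menger[OF sg A(1) A(2) _ cond] assms(10,11) by auto
  obtain ps where ps: "mset ps = Ps" using ex_mset by blast
  have "size Ps = size V1" unfolding Ps(3)[symmetric] by simp
  then have lq: "length ps = q" using assms(10) unfolding ps[symmetric] by simp
  define P where "P i = tp (ps ! i)" for i
  have wki: "wk V E (ps ! i)" if "i < q" for i
  proof -
    have "ps ! i \<in> set ps" using that lq by simp
    then have "ps ! i \<in># Ps" unfolding ps[symmetric] by simp
    then show ?thesis using Ps(1) by blast
  qed
  have tpi: "P i \<noteq> [] \<and> distinct (P i) \<and> set (P i) \<subseteq> set (ps ! i) \<and> pe (P i) \<subseteq> pe (ps ! i)
     \<and> hd (P i) = hd (ps ! i) \<and> last (P i) = last (ps ! i)" if "i < q" for i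
    unfolding P_def using wki[OF that] unfolding wk_def by (intro tp) blast
  have paths: "\<forall>i<q. path V E (P i)"
  proof (intro allI impI)
    fix i assume i: "i < q"
    have "wk V E (P i)" using wki[OF i] tpi[OF i] unfolding wk_def by blast
    then show "path V E (P i)" unfolding path_def walk_wk using tpi[OF i] by blast
  qed
  have disj: "\<forall>i<q. \<forall>j<q. i \<noteq> j \<longrightarrow> path_edges (P i) \<inter> path_edges (P j) = {}"
  proof (intro allI impI)
    fix i j assume ij: "i < q" "j < q" "i \<noteq> j"
    show "path_edges (P i) \<inter> path_edges (P j) = {}"
    proof (rule ccontr)
      assume "path_edges (P i) \<inter> path_edges (P j) \<noteq> {}"
      then obtain e where e: "e \<in> pe (P i)" "e \<in> pe (P j)" unfolding path_edges_pe by blast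
      then have e2: "e \<in> pe (ps ! i)" "e \<in> pe (ps ! j)" using tpi ij by blast+
      have "cntE Ps e = length (filter (\<lambda>p. e \<in> pe p) ps)"
        unfolding cntE_def ps[symmetric] mset_filter[symmetric] size_mset ..
      also have "\<dots> = card {k. k < length ps \<and> e \<in> pe (ps ! k)}" by (rule length_filter_conv_card)
      finally have c: "cntE Ps e = card {k. k < length ps \<and> e \<in> pe (ps ! k)}" .
      have "{i, j} \<subseteq> {k. k < length ps \<and> e \<in> pe (ps ! k)}" using e2 ij lq by auto
      then have "card {i, j} \<le> card {k. k < length ps \<and> e \<in> pe (ps ! k)}" by (intro card_mono) auto
      then have "2 \<le> cntE Ps e" using c ij(3) by simp
      then show False using Ps(2)[rule_format, of e] by linarith
    qed
  qed
  have hds: "image_mset (\<lambda>i. hd (P i)) (mset [0..<q]) = V1"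
  proof -
    have "image_mset (\<lambda>i. hd (P i)) (mset [0..<q]) = mset (map (\<lambda>i. hd (P i)) [0..<q])" by simp
    also have "map (\<lambda>i. hd (P i)) [0..<q] = map (\<lambda>i. hd (ps ! i)) [0..<length ps]"
      using tpi lq by (intro map_cong) auto
    also have "\<dots> = map hd (map ((!) ps) [0..<length ps])" by simp
    also have "\<dots> = map hd ps" by (simp only: map_nth)
    finally show ?thesis using ps Ps(3) by simp
  qed
  have lasts: "image_mset (\<lambda>i. last (P i)) (mset [0..<q]) = V2"
  proof -
    have "image_mset (\<lambda>i. last (P i)) (mset [0..<q]) = mset (map (\<lambda>i. last (P i)) [0..<q])" by simp
    also have "map (\<lambda>i. last (P i)) [0..<q] = map (\<lambda>i. last (ps ! i)) [0..<length ps]"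
      using tpi lq by (intro map_cong) auto
    also have "\<dots> = map last (map ((!) ps) [0..<length ps])" by simp
    also have "\<dots> = map last ps" by (simp only: map_nth)
    finally show ?thesis using ps Ps(4) by simp
  qed
  show ?thesis using paths disj hds lasts by blast
qed

end
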